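(* Let $x_s<x_t$ be integers, let $C\ge 0$, and let $f:[x_s,x_t]\to\mathbb{R}$ be such that $([x_s,x_t],f)$ is an Ameso($C$) pair. If there exist $x',z_s,z_t\in[x_s,x_t]$ with $z_s<x'<z_t$, $f(z_s)-f(x')\ge C$ and $f(z_t)-f(x')\ge C$, then $\min_{y\in[z_s,z_t]}f(y)=\min_{y\in[x_s,x_t]}f(y)$.
   Context: For integers $a\le b$, $[a,b]$ denotes the set of integers $\{a,\dots,b\}$. Floors and ceilings of vectors are taken componentwise. A set $D^n\subseteq\mathbb{Z}^n$ is an Ameso set if $\lceil(\vec x+\vec y)/2\rceil,\lfloor(\vec x+\vec y)/2\rfloor\in D^n$ for all $\vec x,\vec y\in D^n$. For $C\ge 0$, $(D^n,f)$ is an Ameso($C$) pair if $D^n$ is an Ameso set, $f:D^n\to\mathbb{R}$ is bounded below, and $f(\vec x)+f(\vec y)+C\ge f(\lceil(\vec x+\vec y)/2\rceil)+f(\lfloor(\vec x+\vec y)/2\rfloor)$ for all $\vec x,\vec y\in D^n$. *)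

theory Defs
  imports "HOL-Analysis.Analysis"
begin

(* One-dimensional (n = 1) instances of the paper's notions: D \<subseteq> \<int>, f : D \<rightarrow> \<real>. *)

definition ameso_set :: "int set \<Rightarrow> bool" where
  "ameso_set D \<longleftrightarrow>
     (\<forall>x\<in>D. \<forall>y\<in>D. \<lceil>(real_of_int x + real_of_int y) / 2\<rceil> \<in> D \<and>
                      \<lfloor>(real_of_int x + real_of_int y) / 2\<rfloor> \<in> D)"

definition ameso_pair :: "real \<Rightarrow> int set \<Rightarrow> (int \<Rightarrow> real) \<Rightarrow> bool" where
  "ameso_pair C D f \<longleftrightarrow>
     ameso_set D \<and> (\<exists>b. \<forall>x\<in>D. b \<le> f x) \<and>
     (\<forall>x\<in>D. \<forall>y\<in>D.
        f x + f y + C \<ge> f \<lceil>(real_of_int x + real_of_int y) / 2\<rceil>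
                       + f \<lfloor>(real_of_int x + real_of_int y) / 2\<rfloor>)"

end

theory Submission
  imports Defs
begin

lemma interp_bound:
  fixes f :: "int \<Rightarrow> real" and C :: real
  assumes am: "\<And>p q. p \<in> {x..y} \<Longrightarrow> q \<in> {x..y} \<Longrightarrow>
        f p + f q + C \<ge> f \<lceil>(real_of_int p + real_of_int q) / 2\<rceil>
                       + f \<lfloor>(real_of_int p + real_of_int q) / 2\<rfloor>"
    and xy: "x < y" and u: "u \<in> {x..y}"
  shows "real_of_int (y-x) * f u \<le> real_of_int (y-u) * f x + real_of_int (u-x) * f y + real_of_int (y-x) * C"
proof -
  define L where "L w = real_of_int (y-w) * f x + real_of_int (w-x) * f y" for w
  define g where "g w = real_of_int (y-x) * f w - L w" for w
  have fin: "finite (g ` {x..y})" "g ` {x..y} \<noteq> {}" using xy by auto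
  obtain z where z: "z \<in> {x..y}" "g z = Max (g ` {x..y})"
    using Max_in[OF fin] by auto
  have zmax: "\<And>w. w \<in> {x..y} \<Longrightarrow> g w \<le> g z"
    using z fin by simp
  have gx: "g x = 0" unfolding g_def L_def by (simp add: algebra_simps)
  have gy: "g y = 0" unfolding g_def L_def by (simp add: algebra_simps)
  have key: "g z \<le> real_of_int (y-x) * C"
  proof (cases "z - x \<le> y - z")
    case True
    define v where "v = 2*z - x"
    have v: "v \<in> {x..y}" using True z unfolding v_def by auto
    have mid: "(real_of_int x + real_of_int v) / 2 = real_of_int z" unfolding v_def by simp
    have "f x + f v + C \<ge> 2 * f z" using am[of x v] v xy mid by auto
    hence A: "real_of_int (y-x) * (f x + f v + C) \<ge> real_of_int (y-x) * (2 * f z)"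
      using xy by (intro mult_left_mono) auto
    have B: "g v \<le> g z" using zmax v .
    have aff: "L x + L v = 2 * L z" unfolding L_def v_def by (simp add: algebra_simps)
    show ?thesis using A B aff gx unfolding g_def by (simp add: algebra_simps)
  next
    case False
    define v where "v = 2*z - y"
    have v: "v \<in> {x..y}" using False z unfolding v_def by auto
    have mid: "(real_of_int y + real_of_int v) / 2 = real_of_int z" unfolding v_def by simp
    have "f y + f v + C \<ge> 2 * f z" using am[of y v] v xy mid by auto
    hence A: "real_of_int (y-x) * (f y + f v + C) \<ge> real_of_int (y-x) * (2 * f z)"
      using xy by (intro mult_left_mono) auto
    have B: "g v \<le> g z" using zmax v .
    have aff: "L y + L v = 2 * L z" unfolding L_def v_def by (simp add: algebra_simps)
    show ?thesis using A B aff gy unfolding g_def by (simp add: algebra_simps)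
  qed
  have "g u \<le> real_of_int (y-x) * C" using zmax[OF u] key by linarith
  thus ?thesis unfolding g_def L_def by simp
qed

lemma strict_right:
  fixes f :: "int \<Rightarrow> real" and C :: real
  assumes am: "\<And>p q. p \<in> {x..y} \<Longrightarrow> q \<in> {x..y} \<Longrightarrow>
        f p + f q + C \<ge> f \<lceil>(real_of_int p + real_of_int q) / 2\<rceil>
                       + f \<lfloor>(real_of_int p + real_of_int q) / 2\<rfloor>"
    and "x < z" "z < y" "f y < f x"
  shows "f z < f x + C"
proof -
  have I: "real_of_int (y-x) * f z \<le> real_of_int (y-z) * f x + real_of_int (z-x) * f y + real_of_int (y-x) * C"
    using interp_bound[of x y f C z, OF am] assms by auto
  have "real_of_int (z-x) * f y < real_of_int (z-x) * f x"
    using assms by (intro mult_strict_left_mono) auto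
  hence "real_of_int (y-x) * f z < real_of_int (y-x) * (f x + C)"
    using I by (simp add: algebra_simps)
  thus ?thesis using assms by (simp add: mult_less_cancel_left)
qed

lemma strict_left:
  fixes f :: "int \<Rightarrow> real" and C :: real
  assumes am: "\<And>p q. p \<in> {y..x} \<Longrightarrow> q \<in> {y..x} \<Longrightarrow>
        f p + f q + C \<ge> f \<lceil>(real_of_int p + real_of_int q) / 2\<rceil>
                       + f \<lfloor>(real_of_int p + real_of_int q) / 2\<rfloor>"
    and "y < z" "z < x" "f y < f x"
  shows "f z < f x + C"
proof -
  have I: "real_of_int (x-y) * f z \<le> real_of_int (x-z) * f y + real_of_int (z-y) * f x + real_of_int (x-y) * C"
    using interp_bound[of y x f C z, OF am] assms by auto
  have "real_of_int (x-z) * f y < real_of_int (x-z) * f x"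
    using assms by (intro mult_strict_left_mono) auto
  hence "real_of_int (x-y) * f z < real_of_int (x-y) * (f x + C)"
    using I by (simp add: algebra_simps)
  thus ?thesis using assms by (simp add: mult_less_cancel_left)
qed

theorem corollary4:
  fixes x_s x_t :: int and C :: real and f :: "int \<Rightarrow> real"
  assumes "x_s < x_t"
    and "C \<ge> 0"
    and "ameso_pair C {x_s..x_t} f"
    and "x' \<in> {x_s..x_t}" and "z_s \<in> {x_s..x_t}" and "z_t \<in> {x_s..x_t}"
    and "z_s < x'" and "x' < z_t"
    and "f z_s - f x' \<ge> C" and "f z_t - f x' \<ge> C"
  shows "Min (f ` {z_s..z_t}) = Min (f ` {x_s..x_t})"
proof -
  have am: "\<And>p q. p \<in> {x_s..x_t} \<Longrightarrow> q \<in> {x_s..x_t} \<Longrightarrow>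
        f p + f q + C \<ge> f \<lceil>(real_of_int p + real_of_int q) / 2\<rceil>
                       + f \<lfloor>(real_of_int p + real_of_int q) / 2\<rfloor>"
    using assms(3) unfolding ameso_pair_def by blast
  have sub: "{z_s..z_t} \<subseteq> {x_s..x_t}" using assms by auto
  have finS: "finite (f ` {z_s..z_t})" "f ` {z_s..z_t} \<noteq> {}" using assms by auto
  have finT: "finite (f ` {x_s..x_t})" "f ` {x_s..x_t} \<noteq> {}" using assms by auto
  have le1: "Min (f ` {x_s..x_t}) \<le> Min (f ` {z_s..z_t})"
    using Min_antimono[OF image_mono[OF sub] finS(2) finT(1)] .
  have xS: "Min (f ` {z_s..z_t}) \<le> f x'" using finS assms by auto
  have all: "Min (f ` {z_s..z_t}) \<le> f u" if u: "u \<in> {x_s..x_t}" for u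
  proof -
    consider "u \<in> {z_s..z_t}" | "z_t < u" | "u < z_s" by fastforce
    thus ?thesis
    proof cases
      case 1 thus ?thesis using finS by auto
    next
      case 2
      have "\<not> f u < f x'"
      proof
        assume "f u < f x'"
        have am2: "\<And>p q. p \<in> {x'..u} \<Longrightarrow> q \<in> {x'..u} \<Longrightarrow>
          f p + f q + C \<ge> f \<lceil>(real_of_int p + real_of_int q) / 2\<rceil>
                       + f \<lfloor>(real_of_int p + real_of_int q) / 2\<rfloor>"
          using am u assms(4) by auto
        have "f z_t < f x' + C" using strict_right[OF am2] 2 assms \<open>f u < f x'\<close> by auto
        thus False using assms by auto
      qed
      thus ?thesis using xS by auto
    next
      case 3
      have "\<not> f u < f x'"
      proof
        assume "f u < f x'"
        have am2: "\<And>p q. p \<in> {u..x'} \<Longrightarrow> q \<in> {u..x'} \<Longrightarrow>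
          f p + f q + C \<ge> f \<lceil>(real_of_int p + real_of_int q) / 2\<rceil>
                       + f \<lfloor>(real_of_int p + real_of_int q) / 2\<rfloor>"
          using am u assms(4) by auto
        have "f z_s < f x' + C" using strict_left[OF am2] 3 assms \<open>f u < f x'\<close> by auto
        thus False using assms by auto
      qed
      thus ?thesis using xS by auto
    qed
  qed
  have "Min (f ` {x_s..x_t}) \<in> f ` {x_s..x_t}" using Min_in[OF finT] .
  then obtain u where "u \<in> {x_s..x_t}" "Min (f ` {x_s..x_t}) = f u" by auto
  hence "Min (f ` {z_s..z_t}) \<le> Min (f ` {x_s..x_t})" using all by auto
  thus ?thesis using le1 by linarith
qed

end
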